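(* If $f:[-1,1]\to\mathbb{R}$ is $5$-convex, then \[ \int_{-1}^1 f(x)\,dx\;\le\;\tfrac{2}{5}\cdot\tfrac13\bigl(f(-1)+4f(0)+f(1)\bigr)+\tfrac35\Bigl(f\bigl(-\tfrac{\sqrt3}{3}\bigr)+f\bigl(\tfrac{\sqrt3}{3}\bigr)\Bigr)\;\le\;\tfrac16\bigl(f(-1)+f(1)\bigr)+\tfrac56\Bigl(f\bigl(-\tfrac{\sqrt5}{5}\bigr)+f\bigl(\tfrac{\sqrt5}{5}\bigr)\Bigr). \]
   Context: Divided differences are defined recursively by $[x_1;f]:=f(x_1)$ and $[x_1,\dots,x_{m+1};f]:=\frac{[x_2,\dots,x_{m+1};f]-[x_1,\dots,x_m;f]}{x_{m+1}-x_1}$ for pairwise distinct points. For $m\in\mathbb{N}$, a function $f$ on an interval $I$ is called $m$-convex if $[x_1,\dots,x_{m+2};f]\ge 0$ for all pairwise distinct $x_1,\dots,x_{m+2}\in I$. Integrals are Riemann integrals (an $m$-convex function on a compact interval is Riemann integrable). *)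

theory Defs
  imports "HOL-Analysis.Analysis"
begin

fun divdiff :: "real list \<Rightarrow> (real \<Rightarrow> real) \<Rightarrow> real" where
  "divdiff [] f = 0"
| "divdiff [x] f = f x"
| "divdiff (x # y # xs) f =
     (divdiff (y # xs) f - divdiff (butlast (x # y # xs)) f) / (last (y # xs) - x)"

definition m_convex_on :: "nat \<Rightarrow> real set \<Rightarrow> (real \<Rightarrow> real) \<Rightarrow> bool" where
  "m_convex_on m I f \<longleftrightarrow>
     (\<forall>xs. length xs = m + 2 \<and> distinct xs \<and> set xs \<subseteq> I \<longrightarrow> divdiff xs f \<ge> 0)"

end

theory Submission
  imports Defs
begin


definition dds :: "real set \<Rightarrow> (real \<Rightarrow> real) \<Rightarrow> real" where
  "dds S f = (\<Sum>u\<in>S. f u / (\<Prod>w\<in>S-{u}. u - w))"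

lemma prod_nz: "finite T \<Longrightarrow> u \<notin> T \<Longrightarrow> (\<Prod>w\<in>T. u - w) \<noteq> (0::real)"
  by (simp add: prod_zero_iff)

lemma dds_insert:
  assumes "finite T" "z \<notin> T"
  shows "dds (insert z T) f = f z / (\<Prod>w\<in>T. z - w)
     + (\<Sum>u\<in>T. f u / ((u - z) * (\<Prod>w\<in>T-{u}. u - w)))"
proof -
  have 1: "insert z T - {z} = T" using assms by auto
  have "(\<Prod>w\<in>insert z T-{u}. u - w) = (u - z) * (\<Prod>w\<in>T-{u}. u - w)" if "u \<in> T" for u
  proof -
    have "insert z T - {u} = insert z (T - {u})" using that assms by auto
    then show ?thesis using assms by simp
  qed
  then show ?thesis unfolding dds_def using assms 1 by (simp add: sum.insert)
qed

lemma dds_insert2: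
  assumes "finite T" "z \<notin> T" "x \<notin> T" "x \<noteq> z"
  shows "dds (insert x (insert z T)) f = f x / ((x - z) * (\<Prod>w\<in>T. x - w))
     + f z / ((z - x) * (\<Prod>w\<in>T. z - w))
     + (\<Sum>u\<in>T. f u / ((u - x) * ((u - z) * (\<Prod>w\<in>T-{u}. u - w))))"
proof -
  have "dds (insert x (insert z T)) f = f x / (\<Prod>w\<in>insert z T. x - w)
     + (\<Sum>u\<in>insert z T. f u / ((u - x) * (\<Prod>w\<in>insert z T-{u}. u - w)))"
    using assms by (intro dds_insert) auto
  also have "(\<Prod>w\<in>insert z T. x - w) = (x - z) * (\<Prod>w\<in>T. x - w)" using assms by simp
  also have "(\<Sum>u\<in>insert z T. f u / ((u - x) * (\<Prod>w\<in>insert z T-{u}. u - w)))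
      = f z / ((z - x) * (\<Prod>w\<in>T. z - w)) + (\<Sum>u\<in>T. f u / ((u - x) * ((u - z) * (\<Prod>w\<in>T-{u}. u - w))))"
  proof -
    have 1: "insert z T - {z} = T" using assms by auto
    have 2: "(\<Prod>w\<in>insert z T-{u}. u - w) = (u - z) * (\<Prod>w\<in>T-{u}. u - w)" if "u \<in> T" for u
    proof -
      have "insert z T - {u} = insert z (T - {u})" using that assms by auto
      then show ?thesis using assms by simp
    qed
    show ?thesis using assms 1 2 by (simp add: sum.insert)
  qed
  finally show ?thesis by simp
qed

lemma dds_rec:
  assumes "finite T" "z \<notin> T" "x \<notin> T" "x \<noteq> z"
  shows "dds (insert z T) f - dds (insert x T) f = (z - x) * dds (insert x (insert z T)) f"
proof -
  have nz: "(\<Prod>w\<in>T-{u}. u - w) \<noteq> 0" if "u \<in> T" for u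
    using assms by (intro prod_nz) auto
  have nzx: "(\<Prod>w\<in>T. x - w) \<noteq> 0" and nzz: "(\<Prod>w\<in>T. z - w) \<noteq> 0"
    using assms by (auto intro: prod_nz)
  have aux: "c/(b*P) - c/(a*P) = (a-b)*(c/(a*(b*P)))" if "a\<noteq>0" "b\<noteq>0" "P\<noteq>0" for a b c P :: real
    using that by (simp add: field_simps)
  have pt: "f u / ((u - z) * (\<Prod>w\<in>T-{u}. u - w)) - f u / ((u - x) * (\<Prod>w\<in>T-{u}. u - w))
      = (z - x) * (f u / ((u - x) * ((u - z) * (\<Prod>w\<in>T-{u}. u - w))))" if "u \<in> T" for u
  proof -
    have "u \<noteq> x" "u \<noteq> z" using that assms by auto
    then show ?thesis using aux[of "u-x" "u-z" "\<Prod>w\<in>T-{u}. u - w" "f u"] nz[OF that] by simp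
  qed
  have "dds (insert z T) f - dds (insert x T) f =
     f z / (\<Prod>w\<in>T. z - w) - f x / (\<Prod>w\<in>T. x - w) +
     (\<Sum>u\<in>T. f u / ((u - z) * (\<Prod>w\<in>T-{u}. u - w)) - f u / ((u - x) * (\<Prod>w\<in>T-{u}. u - w)))"
    using assms by (simp add: dds_insert sum_subtractf)
  also have "(\<Sum>u\<in>T. f u / ((u - z) * (\<Prod>w\<in>T-{u}. u - w)) - f u / ((u - x) * (\<Prod>w\<in>T-{u}. u - w)))
     = (z - x) * (\<Sum>u\<in>T. f u / ((u - x) * ((u - z) * (\<Prod>w\<in>T-{u}. u - w))))"
    by (simp add: pt sum_distrib_left)
  also have "f z / (\<Prod>w\<in>T. z - w) - f x / (\<Prod>w\<in>T. x - w) =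
     (z - x) * (f x / ((x - z) * (\<Prod>w\<in>T. x - w)) + f z / ((z - x) * (\<Prod>w\<in>T. z - w)))"
  proof -
    have g: "fz/pz - fx/px = d*(fx/((-d)*px) + fz/(d*pz))" if "d\<noteq>0" "px\<noteq>0" "pz\<noteq>0" for d fz pz fx px :: real
      using that by (simp add: field_simps)
    have "x - z = - (z - x)" by simp
    then show ?thesis using g[of "z-x" "\<Prod>w\<in>T. x - w" "\<Prod>w\<in>T. z - w" "f z" "f x"] assms nzx nzz by simp
  qed
  finally show ?thesis using assms by (simp add: dds_insert2 algebra_simps)
qed

lemma set_butlast_distinct:
  assumes "distinct xs" "xs \<noteq> []"
  shows "set (butlast xs) = set xs - {last xs}"
proof -
  have e: "xs = butlast xs @ [last xs]" using assms by simp
  have "distinct (butlast xs @ [last xs])" using assms e by metis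
  then have "last xs \<notin> set (butlast xs)" by simp
  then show ?thesis using e by (metis Diff_insert_absorb Un_insert_right append_Nil2 list.set(2) set_append)
qed

lemma divdiff_dds: "distinct xs \<Longrightarrow> xs \<noteq> [] \<Longrightarrow> divdiff xs f = dds (set xs) f"
proof (induction xs f rule: divdiff.induct)
  case (1 f) then show ?case by simp
next
  case (2 x f) then show ?case by (simp add: dds_def)
next
  case (3 x y xs f)
  define z where "z = last (y # xs)"
  define T where "T = set (x # y # xs) - {x, z}"
  have zin: "z \<in> set (y # xs)" unfolding z_def by simp
  have xz: "x \<noteq> z" using 3(3) zin by auto
  have fT: "finite T" unfolding T_def by simp
  have S: "set (x # y # xs) = insert x (insert z T)" using zin unfolding T_def by auto
  have S1: "set (y # xs) = insert z T" using zin 3(3) unfolding T_def by auto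
  have lz: "last (x # y # xs) = z" unfolding z_def by simp
  have S2: "set (butlast (x # y # xs)) = insert x T"
    using set_butlast_distinct[OF 3(3)] lz xz unfolding T_def by auto
  have d2: "distinct (butlast (x # y # xs))" using 3(3) distinct_butlast by blast
  have IH1: "divdiff (y # xs) f = dds (insert z T) f" using 3 S1 by simp
  have IH2: "divdiff (butlast (x # y # xs)) f = dds (insert x T) f" using 3(2)[OF d2] S2 by simp
  have "divdiff (x # y # xs) f = (dds (insert z T) f - dds (insert x T) f) / (z - x)"
    using IH1 IH2 z_def by simp
  also have "\<dots> = dds (insert x (insert z T)) f"
    using dds_rec[OF fT, of z x f] xz unfolding T_def by auto
  finally show ?case using S by simp
qed

lemma conv_dds:
  assumes "m_convex_on 5 {-1..1} f" "finite S" "card S = 7" "S \<subseteq> {-1..1}"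
  shows "dds S f \<ge> 0"
proof -
  define xs where "xs = sorted_list_of_set S"
  have "distinct xs" "set xs = S" "length xs = 7" using assms unfolding xs_def by auto
  moreover then have "xs \<noteq> []" by auto
  ultimately show ?thesis using assms(1,4) divdiff_dds[of xs f] unfolding m_convex_on_def by auto
qed




definition Qf :: "(real \<Rightarrow> real) \<Rightarrow> real" where
  "Qf g = 2/5 * (1/3 * (g (-1) + 4 * g 0 + g 1)) + 3/5 * (g (- (sqrt 3 / 3)) + g (sqrt 3 / 3))"

definition exact :: "(real \<Rightarrow> real) \<Rightarrow> bool" where
  "exact g \<longleftrightarrow> (g has_integral Qf g) {-1..1}"

lemma pow_has_integral:
  "((\<lambda>x::real. x ^ j) has_integral ((b ^ Suc j - a ^ Suc j) / Suc j)) {a..b}" if "a \<le> b"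
proof -
  have "((\<lambda>x::real. x ^ j) has_integral ((\<lambda>x. x ^ Suc j / Suc j) b - (\<lambda>x. x ^ Suc j / Suc j) a)) {a..b}"
  proof (rule fundamental_theorem_of_calculus[OF that])
    fix x :: real
    have "((\<lambda>x. x ^ Suc j / Suc j) has_real_derivative x ^ j) (at x)"
      by (intro derivative_eq_intros) (auto simp del: of_nat_Suc)
    then show "((\<lambda>x. x ^ Suc j / Suc j) has_vector_derivative x ^ j) (at x within {a..b})"
      using has_real_derivative_iff_has_vector_derivative has_vector_derivative_at_within by blast
  qed
  then show ?thesis by (simp add: diff_divide_distrib)
qed

lemma apow: "(sqrt 3 / 3) ^ 2 = (1/3::real)" "(sqrt 3 / 3) ^ 3 = (sqrt 3 / 9::real)"
  "(sqrt 3 / 3) ^ 4 = (1/9::real)" "(sqrt 3 / 3) ^ 5 = (sqrt 3 / 27::real)"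
proof -
  have e: "sqrt 3 * sqrt 3 = (3::real)" by simp
  have p2: "(sqrt 3 / 3) ^ 2 = (1/3::real)" by (simp add: power2_eq_square)
  show "(sqrt 3 / 3) ^ 2 = (1/3::real)" by (fact p2)
  have "(sqrt 3 / 3) ^ 3 = (sqrt 3 / 3) ^ 2 * (sqrt 3 / 3::real)" by (simp add: power2_eq_square power3_eq_cube)
  then show "(sqrt 3 / 3) ^ 3 = (sqrt 3 / 9::real)" using p2 by simp
  have "(sqrt 3 / 3) ^ 4 = (sqrt 3 / 3) ^ 2 * (sqrt 3 / 3::real) ^ 2" by (metis power_add numeral_Bit0 numeral_One one_add_one)
  then show "(sqrt 3 / 3) ^ 4 = (1/9::real)" using p2 by simp
  have "(sqrt 3 / 3) ^ 5 = ((sqrt 3 / 3) ^ 2) ^ 2 * (sqrt 3 / 3::real)"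
    by (simp flip: power_mult add: power_Suc2[of _ 4, simplified])
  also have "\<dots> = (1/3) ^ 2 * (sqrt 3 / 3)" unfolding p2 by (rule refl)
  also have "\<dots> = sqrt 3 / 27" by (simp add: power2_eq_square)
  finally show "(sqrt 3 / 3) ^ 5 = (sqrt 3 / 27::real)" .
qed

lemma exact_pow: "j \<le> 5 \<Longrightarrow> exact (\<lambda>x. x ^ j)"
proof -
  assume j: "j \<le> 5"
  have I: "((\<lambda>x::real. x ^ j) has_integral ((1 ^ Suc j - (-1) ^ Suc j) / Suc j)) {-1..1}"
    using pow_has_integral[of "-1" 1 j] by simp
  have Q: "Qf (\<lambda>x. x ^ j) = 2/5 * (1/3 * ((-1) ^ j + 4 * 0 ^ j + 1)) + 3/5 * ((-1) ^ j * (sqrt 3 / 3) ^ j + (sqrt 3 / 3) ^ j)"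
    unfolding Qf_def by (simp add: power_minus[of "sqrt 3 / 3"])
  have "j = 0 \<or> j = 1 \<or> j = 2 \<or> j = 3 \<or> j = 4 \<or> j = 5" using j by auto
  then have "Qf (\<lambda>x. x ^ j) = (1 ^ Suc j - (-1) ^ Suc j) / Suc j"
    unfolding Q by (elim disjE) (simp_all add: apow)
  then show ?thesis using I unfolding exact_def by simp
qed

lemma exact_add: "exact g \<Longrightarrow> exact h \<Longrightarrow> exact (\<lambda>x. g x + h x)"
  unfolding exact_def Qf_def
  by (drule (1) has_integral_add) (simp add: algebra_simps)

lemma exact_cmult: "exact g \<Longrightarrow> exact (\<lambda>x. c * g x)"
  unfolding exact_def Qf_def
  by (drule has_integral_mult_right[where c=c]) (simp add: algebra_simps)

lemma exact_sum: "finite A \<Longrightarrow> (\<And>i. i \<in> A \<Longrightarrow> exact (g i)) \<Longrightarrow> exact (\<lambda>x. \<Sum>i\<in>A. g i x)"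
proof (induction A rule: finite_induct)
  case empty
  have "exact (\<lambda>x. 0 * x ^ 0)" by (intro exact_cmult exact_pow) auto
  then show ?case by simp
next
  case (insert a A)
  then show ?case by (simp add: exact_add)
qed

lemma exact_prod:
  "finite M \<Longrightarrow> card M + j \<le> 5 \<Longrightarrow> exact (\<lambda>x. x ^ j * (\<Prod>m\<in>M. x - m))"
proof (induction M arbitrary: j rule: finite_induct)
  case empty
  then show ?case using exact_pow[of j] by simp
next
  case (insert m M)
  have 1: "exact (\<lambda>x. x ^ Suc j * (\<Prod>m\<in>M. x - m))" using insert.IH[of "Suc j"] insert.prems insert.hyps by simp
  have 2: "exact (\<lambda>x. (-m) * (x ^ j * (\<Prod>m\<in>M. x - m)))" using insert by (intro exact_cmult) simp
  have "exact (\<lambda>x. x ^ Suc j * (\<Prod>m\<in>M. x - m) + (-m) * (x ^ j * (\<Prod>m\<in>M. x - m)))"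
    using exact_add[OF 1 2] .
  moreover have "(\<lambda>x. x ^ Suc j * (\<Prod>m\<in>M. x - m) + (-m) * (x ^ j * (\<Prod>m\<in>M. x - m)))
     = (\<lambda>x. x ^ j * (\<Prod>m\<in>insert m M. x - m))" using insert by (auto simp: algebra_simps)
  ultimately show ?case by simp
qed




lemma a_facts: "(sqrt 3/3::real)^2 = 1/3" "1/2 < sqrt 3/(3::real)" "sqrt 3/3 < (1::real)"
  "0 < sqrt 5/(5::real)" "sqrt 5/5 < sqrt 3/(3::real)" "(sqrt 5/5::real)^2 = 1/5"
proof -
  show a2: "(sqrt 3/3::real)^2 = 1/3" by (simp add: power_divide)
  show b2: "(sqrt 5/5::real)^2 = 1/5" by (simp add: power_divide)
  have a0: "0 \<le> sqrt 3/(3::real)" by simp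
  show "1/2 < sqrt 3/(3::real)"
    by (rule power_less_imp_less_base[of _ 2]) (use a2 a0 in \<open>auto simp: power_divide\<close>)
  show "sqrt 3/3 < (1::real)"
    by (rule power_less_imp_less_base[of _ 2]) (use a2 in auto)
  show "0 < sqrt 5/(5::real)" by simp
  show "sqrt 5/5 < sqrt 3/(3::real)"
    by (rule power_less_imp_less_base[of _ 2]) (use a2 b2 a0 in auto)
qed

definition NN :: "real set" where "NN = {- (sqrt 3/3), -1/2, 0, 1/2, sqrt 3/3}"

lemma NN_gen: fixes a :: real assumes "1/2 < a" "a < 1"
  shows "finite {-a, -1/2, 0, 1/2, a}" "card {-a, -1/2, 0, 1/2, a} = 5"
   "{-a, -1/2, 0, 1/2, a} \<subseteq> {-1..1}" "-1 \<notin> {-a, -1/2, 0, 1/2, a}" "1 \<notin> {-a, -1/2, 0, 1/2, a}"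
  using assms by auto

lemma NN_facts: "finite NN" "card NN = 5" "NN \<subseteq> {-1..1}" "-1 \<notin> NN" "1 \<notin> NN" "0 \<in> NN"
  "sqrt 3/3 \<in> NN" "- (sqrt 3/3) \<in> NN"
  using NN_gen[OF a_facts(2,3)] unfolding NN_def by auto

lemma v_gen: fixes a x :: real assumes "a^2 = 1/3" "1/2 < a"
  shows "(\<Prod>w\<in>{-a, -1/2, 0, 1/2, a}. x - w) = x^5 - 7/12*x^3 + 1/12*x"
proof -
  have "(\<Prod>w\<in>{-a, -1/2, 0, 1/2, a}. x - w) = (x + a) * ((x + 1/2) * (x * ((x - 1/2) * (x - a))))"
    using assms by auto
  also have "\<dots> = x^5 - 7/12*x^3 + 1/12*x" using assms(1) by algebra
  finally show ?thesis .
qed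

lemma v_eq: "(\<Prod>w\<in>NN. x - w) = x^5 - 7/12*x^3 + 1/12*x"
  unfolding NN_def using v_gen[OF a_facts(1,2)] by simp

definition G :: "(real \<Rightarrow> real) \<Rightarrow> real \<Rightarrow> real" where "G f x = dds (insert x NN) f"
definition Gt :: "(real \<Rightarrow> real) \<Rightarrow> real \<Rightarrow> real" where "Gt f x = Sup (G f ` ({-1..x} - NN))"

lemma G_mono:
  assumes cv: "m_convex_on 5 {-1..1} f" and x: "x \<in> {-1..1} - NN" and y: "y \<in> {-1..1} - NN" and "x \<le> y"
  shows "G f x \<le> G f y"
proof (cases "x = y")
  case True then show ?thesis by simp
next
  case False
  have r: "dds (insert y NN) f - dds (insert x NN) f = (y - x) * dds (insert x (insert y NN)) f"
    using dds_rec[of NN y x f] NN_facts x y False by auto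
  have "dds (insert x (insert y NN)) f \<ge> 0"
    using conv_dds[OF cv, of "insert x (insert y NN)"] NN_facts x y False by auto
  then show ?thesis using r \<open>x \<le> y\<close> unfolding G_def by (smt (verit) mult_nonneg_nonneg)
qed

lemma Gt_eq:
  assumes cv: "m_convex_on 5 {-1..1} f" and x: "x \<in> {-1..1} - NN"
  shows "Gt f x = G f x"
  unfolding Gt_def
proof (rule cSup_eq_maximum)
  show "G f x \<in> G f ` ({-1..x} - NN)" using x by auto
  show "\<And>z. z \<in> G f ` ({-1..x} - NN) \<Longrightarrow> z \<le> G f x"
    using G_mono[OF cv _ x] x by auto
qed

lemma Gt_mono:
  assumes cv: "m_convex_on 5 {-1..1} f" and "-1 \<le> x" "x \<le> y" "y \<le> 1"
  shows "Gt f x \<le> Gt f y"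
  unfolding Gt_def
proof (rule cSup_subset_mono)
  show "G f ` ({-1..x} - NN) \<noteq> {}" using assms NN_facts by auto
  show "bdd_above (G f ` ({-1..y} - NN))"
    unfolding bdd_above_def using G_mono[OF cv _ _, of _ 1] NN_facts assms
    by (intro exI[of _ "G f 1"]) auto
  show "G f ` ({-1..x} - NN) \<subseteq> G f ` ({-1..y} - NN)" using assms by auto
qed

definition Pn :: "real set \<Rightarrow> (real \<Rightarrow> real) \<Rightarrow> real \<Rightarrow> real" where
  "Pn N f x = (\<Sum>u\<in>N. f u * ((\<Prod>w\<in>N-{u}. x - w) / (\<Prod>w\<in>N-{u}. u - w)))"

lemma decomp:
  assumes "finite N" "x \<notin> N"
  shows "f x = (\<Prod>w\<in>N. x - w) * dds (insert x N) f + Pn N f x"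
proof -
  define V where "V = (\<Prod>w\<in>N. x - w)"
  have V0: "V \<noteq> 0" unfolding V_def using assms by (rule prod_nz)
  have Vu: "V = (x - u) * (\<Prod>w\<in>N-{u}. x - w)" if "u \<in> N" for u
    unfolding V_def using assms that by (simp add: prod.remove)
  have t: "V * (f u / ((u - x) * (\<Prod>w\<in>N-{u}. u - w))) = - (f u * ((\<Prod>w\<in>N-{u}. x - w) / (\<Prod>w\<in>N-{u}. u - w)))"
    if "u \<in> N" for u
  proof -
    have g: "((-d)*A)*(fu/(d*c)) = -(fu*(A/c))" if "d \<noteq> 0" "c \<noteq> 0" for d c A fu :: real
      using that by (simp add: field_simps)
    have "u - x \<noteq> 0" using that assms by auto
    moreover have "(\<Prod>w\<in>N-{u}. u - w) \<noteq> 0" using that assms by (intro prod_nz) auto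
    moreover have "V = (-(u - x)) * (\<Prod>w\<in>N-{u}. x - w)" using Vu[OF that] by simp
    ultimately show ?thesis using g by metis
  qed
  have "V * dds (insert x N) f = V * (f x / V) + (\<Sum>u\<in>N. V * (f u / ((u - x) * (\<Prod>w\<in>N-{u}. u - w))))"
    using assms unfolding V_def by (simp add: dds_insert distrib_left sum_distrib_left)
  also have "\<dots> = f x - Pn N f x"
    using V0 t unfolding Pn_def by (simp add: sum_negf)
  finally show ?thesis unfolding V_def by simp
qed

lemma Pn_node:
  assumes "finite N" "u0 \<in> N"
  shows "Pn N f u0 = f u0"
proof -
  have z: "(\<Prod>w\<in>N-{u}. u0 - w) = 0" if "u \<in> N - {u0}" for u
    using assms that by (subst prod_zero_iff) auto
  have nz: "(\<Prod>w\<in>N-{u0}. u0 - w) \<noteq> 0" using assms by (intro prod_nz) auto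
  have s0: "(\<Sum>u\<in>N-{u0}. f u * ((\<Prod>w\<in>N-{u}. u0 - w) / (\<Prod>w\<in>N-{u}. u - w))) = 0"
    by (rule sum.neutral) (simp add: z)
  show ?thesis unfolding Pn_def using assms s0 nz by (simp add: sum.remove)
qed

lemma Pn_exact:
  assumes "finite N" "card N \<le> 5"
  shows "exact (Pn N f)"
proof -
  have "exact (\<lambda>x. \<Sum>u\<in>N. (f u / (\<Prod>w\<in>N-{u}. u - w)) * (x ^ 0 * (\<Prod>w\<in>N-{u}. x - w)))"
  proof (rule exact_sum[OF assms(1)])
    fix u assume "u \<in> N"
    have "card (N - {u}) + 0 \<le> 5" using assms card_Diff1_le[of N u] by simp
    then show "exact (\<lambda>x. (f u / (\<Prod>w\<in>N-{u}. u - w)) * (x ^ 0 * (\<Prod>w\<in>N-{u}. x - w)))"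
      using assms by (intro exact_cmult exact_prod) auto
  qed
  moreover have "(\<lambda>x. \<Sum>u\<in>N. (f u / (\<Prod>w\<in>N-{u}. u - w)) * (x ^ 0 * (\<Prod>w\<in>N-{u}. x - w))) = Pn N f"
    unfolding Pn_def by (auto simp: field_simps)
  ultimately show ?thesis by simp
qed




lemma seven_gen:
  fixes a b :: real
  assumes a2: "a^2 = 1/3" and b2: "b^2 = 1/5" and o: "0 < b" "b < a" "a < 1"
  shows "dds {-1, -a, -b, 0, b, a, 1} f = 15/16*(f (-1) + f 1) - 15 * f 0 - 135/8*(f (-a) + f a) + 375/16*(f (-b) + f b)"
proof -
  define S where "S = {-1, -a, -b, 0, b, a, 1::real}"
  have ne: "-1 \<noteq> (-a::real)"
    "-1 \<noteq> (-b::real)"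
    "-1 \<noteq> (0::real)"
    "-1 \<noteq> (b::real)"
    "-1 \<noteq> (a::real)"
    "-1 \<noteq> (1::real)"
    "-a \<noteq> (-1::real)"
    "-a \<noteq> (-b::real)"
    "-a \<noteq> (0::real)"
    "-a \<noteq> (b::real)"
    "-a \<noteq> (a::real)"
    "-a \<noteq> (1::real)"
    "-b \<noteq> (-1::real)"
    "-b \<noteq> (-a::real)"
    "-b \<noteq> (0::real)"
    "-b \<noteq> (b::real)"
    "-b \<noteq> (a::real)"
    "-b \<noteq> (1::real)"
    "0 \<noteq> (-1::real)"
    "0 \<noteq> (-a::real)"
    "0 \<noteq> (-b::real)"
    "0 \<noteq> (b::real)"
    "0 \<noteq> (a::real)"
    "0 \<noteq> (1::real)"
    "b \<noteq> (-1::real)"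
    "b \<noteq> (-a::real)"
    "b \<noteq> (-b::real)"
    "b \<noteq> (0::real)"
    "b \<noteq> (a::real)"
    "b \<noteq> (1::real)"
    "a \<noteq> (-1::real)"
    "a \<noteq> (-a::real)"
    "a \<noteq> (-b::real)"
    "a \<noteq> (0::real)"
    "a \<noteq> (b::real)"
    "a \<noteq> (1::real)"
    "1 \<noteq> (-1::real)"
    "1 \<noteq> (-a::real)"
    "1 \<noteq> (-b::real)"
    "1 \<noteq> (0::real)"
    "1 \<noteq> (b::real)"
    "1 \<noteq> (a::real)"
    using o by auto
  define D where "D u = (if u = 1 \<or> u = -1 then 16/15 else if u = 0 then -1/15 else if u = a \<or> u = -a then -8/135 else (16/375::real))" for u
  have key: "(\<Prod>w\<in>S-{u}. u - w) = D u" if "u \<in> S" for u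
  proof -
    have "u = -1 \<or> u = -a \<or> u = -b \<or> u = 0 \<or> u = b \<or> u = a \<or> u = 1" using that unfolding S_def by auto
    then show ?thesis
    proof (elim disjE)
      assume u: "u = -1"
      have Sx: "S - {-1} = {-a, -b, 0, b, a, 1}" unfolding S_def using ne by auto
      have "(\<Prod>w\<in>S-{u}. u - w) = 16/15"
        unfolding u Sx using ne apply simp using a2 b2 by algebra
      then show ?thesis unfolding D_def using u ne by simp
    next
      assume u: "u = 1"
      have Sx: "S - {1} = {-1, -a, -b, 0, b, a}" unfolding S_def using ne by auto
      have "(\<Prod>w\<in>S-{u}. u - w) = 16/15"
        unfolding u Sx using ne apply simp using a2 b2 by algebra
      then show ?thesis unfolding D_def using u ne by simp
    next
      assume u: "u = 0"
      have Sx: "S - {0} = {-1, -a, -b, b, a, 1}" unfolding S_def using ne by auto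
      have "(\<Prod>w\<in>S-{u}. u - w) = -1/15"
        unfolding u Sx using ne apply simp using a2 b2 by algebra
      then show ?thesis unfolding D_def using u ne by simp
    next
      assume u: "u = a"
      have Sx: "S - {a} = {-1, -a, -b, 0, b, 1}" unfolding S_def using ne by auto
      have "(\<Prod>w\<in>S-{u}. u - w) = -8/135"
        unfolding u Sx using ne apply simp using a2 b2 by algebra
      then show ?thesis unfolding D_def using u ne by simp
    next
      assume u: "u = -a"
      have Sx: "S - {-a} = {-1, -b, 0, b, a, 1}" unfolding S_def using ne by auto
      have "(\<Prod>w\<in>S-{u}. u - w) = -8/135"
        unfolding u Sx using ne apply simp using a2 b2 by algebra
      then show ?thesis unfolding D_def using u ne by simp
    next
      assume u: "u = b"
      have Sx: "S - {b} = {-1, -a, -b, 0, a, 1}" unfolding S_def using ne by auto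
      have "(\<Prod>w\<in>S-{u}. u - w) = 16/375"
        unfolding u Sx using ne apply simp using a2 b2 by algebra
      then show ?thesis unfolding D_def using u ne by simp
    next
      assume u: "u = -b"
      have Sx: "S - {-b} = {-1, -a, 0, b, a, 1}" unfolding S_def using ne by auto
      have "(\<Prod>w\<in>S-{u}. u - w) = 16/375"
        unfolding u Sx using ne apply simp using a2 b2 by algebra
      then show ?thesis unfolding D_def using u ne by simp
    qed
  qed
  have "dds S f = (\<Sum>u\<in>S. f u / D u)" unfolding dds_def using key by (intro sum.cong) auto
  also have "\<dots> = 15/16*(f (-1) + f 1) - 15 * f 0 - 135/8*(f (-a) + f a) + 375/16*(f (-b) + f b)"
    unfolding S_def D_def using ne by (simp add: field_simps)
  finally show ?thesis unfolding S_def .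
qed




lemma seven:
  "dds {-1, -(sqrt 3/3), -(sqrt 5/5), 0, sqrt 5/5, sqrt 3/3, 1} f = 15/16*(f (-1) + f 1) - 15 * f 0
     - 135/8*(f (-(sqrt 3/3)) + f (sqrt 3/3)) + 375/16*(f (-(sqrt 5/5)) + f (sqrt 5/5))"
  by (rule seven_gen[OF a_facts(1,6,4,5,3)])

lemma seven_set:
  "finite {-1, -(sqrt 3/3), -(sqrt 5/5), 0, sqrt 5/5, sqrt 3/3, 1::real}"
  "card {-1, -(sqrt 3/3), -(sqrt 5/5), 0, sqrt 5/5, sqrt 3/3, 1::real} = 7"
  "{-1, -(sqrt 3/3), -(sqrt 5/5), 0, sqrt 5/5, sqrt 3/3, 1::real} \<subseteq> {-1..1}"
proof -
  have g: "finite {-1, -a, -b, 0, b, a, 1::real} \<and> card {-1, -a, -b, 0, b, a, 1::real} = 7 \<and>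
     {-1, -a, -b, 0, b, a, 1::real} \<subseteq> {-1..1}" if "0 < b" "b < a" "a < 1" for a b :: real
    using that by auto
  show "finite {-1, -(sqrt 3/3), -(sqrt 5/5), 0, sqrt 5/5, sqrt 3/3, 1::real}"
    "card {-1, -(sqrt 3/3), -(sqrt 5/5), 0, sqrt 5/5, sqrt 3/3, 1::real} = 7"
    "{-1, -(sqrt 3/3), -(sqrt 5/5), 0, sqrt 5/5, sqrt 3/3, 1::real} \<subseteq> {-1..1}"
    using g[OF a_facts(4,5,3)] by auto
qed

theorem proposition4:
  fixes f :: "real \<Rightarrow> real"
  assumes "m_convex_on 5 {-1..1} f"
  shows "integral {-1..1} f
           \<le> 2/5 * (1/3 * (f (-1) + 4 * f 0 + f 1))
             + 3/5 * (f (- (sqrt 3 / 3)) + f (sqrt 3 / 3))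
         \<and> 2/5 * (1/3 * (f (-1) + 4 * f 0 + f 1))
             + 3/5 * (f (- (sqrt 3 / 3)) + f (sqrt 3 / 3))
           \<le> 1/6 * (f (-1) + f 1) + 5/6 * (f (- (sqrt 5 / 5)) + f (sqrt 5 / 5))"
proof -
  note cv = assms
  define V where "V x = x^5 - 7/12*x^3 + 1/12*x" for x :: real
  define W where "W x = x^6/6 - 7/48*x^4 + x^2/24" for x :: real
  have Vc: "continuous_on {-1..1} V" unfolding V_def by (intro continuous_intros)
  then have Vint: "V integrable_on {-1..1}" by (rule integrable_continuous_interval)
  have IW: "integral {p..q} V = W q - W p" if "p \<le> q" for p q
  proof -
    have "(V has_integral (W q - W p)) {p..q}"
    proof (rule fundamental_theorem_of_calculus[OF that])
      fix x :: real
      have "(W has_real_derivative V x) (at x)"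
        unfolding W_def V_def by (rule derivative_eq_intros refl | simp)+
      then show "(W has_vector_derivative V x) (at x within {p..q})"
        using has_real_derivative_iff_has_vector_derivative has_vector_derivative_at_within by blast
    qed
    then show ?thesis by (rule integral_unique)
  qed
  have gm: "Gt f x \<le> Gt f y" if "-1 \<le> x" "x \<le> y" "y \<le> 1" for x y
    using Gt_mono[OF cv that] .
  obtain c where c: "c \<in> {-1..1}"
    and hc: "((\<lambda>x. Gt f x * V x) has_integral (Gt f (-1) * integral {-1..c} V + Gt f 1 * integral {c..1} V)) {-1..1}"
    using second_mean_value_theorem_full[where g="Gt f", OF Vint _ gm] by auto
  have hP: "(Pn NN f has_integral Qf (Pn NN f)) {-1..1}"
    using Pn_exact[of NN f] NN_facts unfolding exact_def by simp
  have dec: "f x = V x * G f x + Pn NN f x" if "x \<notin> NN" for x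
    using decomp[OF NN_facts(1) that, of f] v_eq unfolding G_def V_def by simp
  have hf: "(f has_integral (Qf (Pn NN f) + (Gt f (-1) * integral {-1..c} V + Gt f 1 * integral {c..1} V))) {-1..1}"
  proof (rule has_integral_spike_finite[OF NN_facts(1) _ has_integral_add[OF hP hc]])
    fix x assume x: "x \<in> {-1..1} - NN"
    show "f x = Pn NN f x + Gt f x * V x" using dec[of x] Gt_eq[OF cv x] x by simp
  qed
  have Wc: "W c \<ge> 0"
  proof -
    have "8 * c^4 - 7 * c^2 + 2 = 8 * (c^2 - 7/16)^2 + 15/32" by algebra
    moreover have "0 \<le> (c^2 - 7/16)^2" by simp
    ultimately have p: "8 * c^4 - 7 * c^2 + 2 \<ge> 0" by linarith
    have q: "c^2 * (8 * c^4 - 7 * c^2 + 2) \<ge> 0" using p by simp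
    have "W c = c^2 * (8 * c^4 - 7 * c^2 + 2) / 48" unfolding W_def by (simp add: field_simps power2_eq_square) (simp add: algebra_simps power_def)
    then show ?thesis using q by simp
  qed
  have Wpm: "W (-1) = 1/16" "W 1 = 1/16" unfolding W_def by simp_all
  have Gm: "Gt f (-1) = G f (-1)" "Gt f 1 = G f 1" using Gt_eq[OF cv] NN_facts by auto
  have Gle: "G f (-1) \<le> G f 1" using G_mono[OF cv, of "-1" 1] NN_facts by auto
  have int: "integral {-1..1} f = Qf (Pn NN f) + (G f (-1) * (W c - 1/16) + G f 1 * (1/16 - W c))"
    using integral_unique[OF hf] IW[of "-1" c] IW[of c 1] c Wpm Gm by simp
  have fm1: "f (-1) = -1/2 * G f (-1) + Pn NN f (-1)" using dec[of "-1"] NN_facts unfolding V_def by simp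
  have f1: "f 1 = 1/2 * G f 1 + Pn NN f 1" using dec[of 1] NN_facts unfolding V_def by simp
  have f0: "f 0 = Pn NN f 0" "f (sqrt 3/3) = Pn NN f (sqrt 3/3)" "f (-(sqrt 3/3)) = Pn NN f (-(sqrt 3/3))"
    using Pn_node[OF NN_facts(1)] NN_facts by auto
  have Qf: "Qf f = Qf (Pn NN f) + 1/15 * (G f 1 - G f (-1))"
    unfolding Qf_def using fm1 f1 f0 by (simp add: algebra_simps)
  have "(G f 1 - G f (-1)) * (1/240 + W c) \<ge> 0" using Gle Wc by simp
  then have part1: "integral {-1..1} f \<le> Qf f" using int Qf by (simp add: algebra_simps, linarith)
  have d7: "dds {-1, -(sqrt 3/3), -(sqrt 5/5), 0, sqrt 5/5, sqrt 3/3, 1} f \<ge> 0"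
    using conv_dds[OF cv seven_set] .
  have part2: "Qf f \<le> 1/6 * (f (-1) + f 1) + 5/6 * (f (- (sqrt 5 / 5)) + f (sqrt 5 / 5))"
    using d7 unfolding seven Qf_def by (simp add: field_simps)
  show ?thesis using part1 part2 unfolding Qf_def by simp
qed


end
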